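(* Let $\mathcal{Q}^2$ be the set of all quadrilaterals $[I,J] := \mathrm{conv}\{-a e_1, b e_1, -c e_2, d e_2\}$ with $a,b,c,d>0$. Assume that $\mu \colon \mathcal{Q}^2 \to \mathbb{R}^2$ is a valuation which is $\mathrm{VL}(2)$-covariant, i.e. $\mu(\phi P) = \phi\,\mu(P)$ whenever $\phi \in \mathrm{VL}(2)$ and $P, \phi P \in \mathcal{Q}^2$. Define $F(r) := \frac12 \mu_1(\mathrm{conv}\{-e_1, r e_1, -e_2, e_2\})$ for $r \in (0,\infty)$, where $\mu_1,\mu_2$ denote the components of $\mu$. Then for all $a,b,c,d>0$, \[ \mu[I,J] = \begin{pmatrix} -\frac1c & \frac1c & -\frac1d & \frac1d \\ -\frac1a & -\frac1b & \frac1a & \frac1b \end{pmatrix} \begin{pmatrix} F(ac)\\ F(bc) \\ F(ad) \\ F(bd)\end{pmatrix}. \] In particular, $\mu[I,J] = \tilde\mu(\mathrm{conv}\{-ae_1, be_1, -ce_2\}) + \tilde\mu(\mathrm{conv}\{-ae_1,be_1,de_2\})$, where for all $a,b,c,d>0$ \[ \tilde\mu(\mathrm{conv}\{-ae_1, be_1, -ce_2\}) := \begin{pmatrix} \frac1c(F(bc)-F(ac)) \\ -\frac1a F(ac) - \frac1b F(bc)\end{pmatrix}, \qquad \tilde\mu(\mathrm{conv}\{-ae_1, be_1, de_2\}) := \begin{pmatrix} \frac1d(F(bd)-F(ad)) \\ \frac1a F(ad) + \frac1b F(bd)\end{pmatrix}. \]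
   Context: $e_1,e_2$ is the standard basis of $\mathbb{R}^2$. $\mathrm{VL}(2)$ is the group of linear maps of $\mathbb{R}^2$ with determinant $1$ or $-1$. A map $\mu$ on a family $\mathcal{S}$ of sets is a valuation if $\mu(K \cup L) + \mu(K \cap L) = \mu(K) + \mu(L)$ whenever $K, L, K\cup L, K \cap L \in \mathcal{S}$. *)

theory Defs
  imports "HOL-Analysis.Analysis"
begin

definition e1 :: "real^2" where "e1 = axis 1 1"
definition e2 :: "real^2" where "e2 = axis 2 1"

definition quad :: "real \<Rightarrow> real \<Rightarrow> real \<Rightarrow> real \<Rightarrow> (real^2) set" where
  "quad a b c d = convex hull {-(a *\<^sub>R e1), b *\<^sub>R e1, -(c *\<^sub>R e2), d *\<^sub>R e2}"

definition Q2 :: "(real^2) set set" where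
  "Q2 = {P. \<exists>a b c d. a > 0 \<and> b > 0 \<and> c > 0 \<and> d > 0 \<and> P = quad a b c d}"

definition valuation_on :: "'a set set \<Rightarrow> ('a set \<Rightarrow> 'b::ab_group_add) \<Rightarrow> bool" where
  "valuation_on S \<mu> \<longleftrightarrow>
     (\<forall>K L. K \<in> S \<longrightarrow> L \<in> S \<longrightarrow> K \<union> L \<in> S \<longrightarrow> K \<inter> L \<in> S \<longrightarrow>
        \<mu> (K \<union> L) + \<mu> (K \<inter> L) = \<mu> K + \<mu> L)"

definition VL2 :: "(real^2^2) set" where
  "VL2 = {A. det A = 1 \<or> det A = -1}"

definition VL2_covariant :: "((real^2) set \<Rightarrow> real^2) \<Rightarrow> bool" where
  "VL2_covariant \<mu> \<longleftrightarrow>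
     (\<forall>A \<in> VL2. \<forall>P \<in> Q2. (\<lambda>x. A *v x) ` P \<in> Q2 \<longrightarrow>
        \<mu> ((\<lambda>x. A *v x) ` P) = A *v \<mu> P)"

end

theory Submission imports Defs begin

lemma e_comp[simp]: "e1$1 = 1" "e1$2 = 0" "e2$1 = 0" "e2$2 = 1"
  by (simp_all add: e1_def e2_def axis_def)

definition qpoly :: "real \<Rightarrow> real \<Rightarrow> real \<Rightarrow> real \<Rightarrow> (real^2) set" where
  "qpoly a b c d = {p. p$1/b + p$2/d \<le> 1 \<and> -p$1/a + p$2/d \<le> 1 \<and> p$1/b - p$2/c \<le> 1 \<and> -p$1/a - p$2/c \<le> 1}"

lemma inner_vec2: "inner (vector [u, v] :: real^2) p = u * p$1 + v * p$2"
  by (simp add: inner_vec_def sum_2)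

lemma qpoly_convex: "convex (qpoly a b c d)"
proof -
  have "qpoly a b c d = {p. inner (vector [1/b, 1/d] :: real^2) p \<le> 1} \<inter> {p. inner (vector [-1/a, 1/d] :: real^2) p \<le> 1}
      \<inter> {p. inner (vector [1/b, -1/c] :: real^2) p \<le> 1} \<inter> {p. inner (vector [-1/a, -1/c] :: real^2) p \<le> 1}"
    unfolding qpoly_def inner_vec2 by auto
  then show ?thesis by (simp add: convex_Int convex_halfspace_le)
qed

lemma quad_sub: assumes "a>0" "b>0" "c>0" "d>0" shows "quad a b c d \<subseteq> qpoly a b c d"
proof -
  have "{- (a *\<^sub>R e1), b *\<^sub>R e1, - (c *\<^sub>R e2), d *\<^sub>R e2} \<subseteq> qpoly a b c d"
    using assms by (auto simp: qpoly_def) (smt (verit) divide_pos_pos)+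
  then show ?thesis unfolding quad_def by (metis hull_minimal qpoly_convex)
qed

lemma poly_sub: assumes a: "a>0" and b: "b>0" and c: "c>0" and d: "d>0" shows "qpoly a b c d \<subseteq> quad a b c d"
proof
  fix p assume p: "p \<in> qpoly a b c d"
  define x where "x = p$1"
  define y where "y = p$2"
  have i1: "x/b + y/d \<le> 1" and i2: "-x/a + y/d \<le> 1" and i3: "x/b - y/c \<le> 1" and i4: "-x/a - y/c \<le> 1"
    using p by (auto simp: qpoly_def x_def y_def)
  show "p \<in> quad a b c d"
  proof (cases "y \<ge> 0")
    case True
    define w where "w = y/d"
    define v where "v = (x + a*(1-w))/(a+b)"
    define u where "u = (b*(1-w) - x)/(a+b)"
    have w0: "w \<ge> 0" using True d by (simp add: w_def)
    have "-x/a \<le> 1 - w" using i2 by (simp add: w_def)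
    hence "-x \<le> a*(1-w)" using a by (simp add: field_simps)
    hence v0: "v \<ge> 0" using a b by (simp add: v_def)
    have "x/b \<le> 1 - w" using i1 by (simp add: w_def)
    hence "x \<le> b*(1-w)" using b by (simp add: field_simps)
    hence u0: "u \<ge> 0" using a b by (simp add: u_def)
    have "u + v = ((b*(1-w) - x) + (x + a*(1-w)))/(a+b)" unfolding u_def v_def by (rule add_divide_distrib[symmetric])
    also have "\<dots> = (a+b)*(1-w)/(a+b)" by (simp add: algebra_simps)
    also have "\<dots> = 1 - w" using a b by simp
    finally have s: "u + v + w = 1" by simp
    have "p = u *\<^sub>R (-(a *\<^sub>R e1)) + v *\<^sub>R (b *\<^sub>R e1) + w *\<^sub>R (d *\<^sub>R e2)"
    proof -
      have ab: "a + b > 0" using a b by simp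
      have "-(u * a) + v * b = (-((b*(1-w) - x) * a) + (x + a*(1-w)) * b)/(a+b)"
        unfolding u_def v_def by (simp add: divide_simps)
      also have "\<dots> = (x * (a+b))/(a+b)" by (simp add: algebra_simps)
      also have "\<dots> = x" using ab by simp
      finally have c1: "-(u * a) + v * b = x" .
      have c2: "w * d = y" unfolding w_def using d by simp
      show ?thesis unfolding vec_eq_iff forall_2 using c1 c2
        by (simp add: x_def y_def algebra_simps)
    qed
    hence "p \<in> convex hull {-(a *\<^sub>R e1), b *\<^sub>R e1, d *\<^sub>R e2}"
      unfolding convex_hull_3 using u0 v0 w0 s by blast
    moreover have "convex hull {-(a *\<^sub>R e1), b *\<^sub>R e1, d *\<^sub>R e2} \<subseteq> quad a b c d"
      unfolding quad_def by (rule hull_mono) auto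
    ultimately show ?thesis by blast
  next
    case False
    define w where "w = -y/c"
    define v where "v = (x + a*(1-w))/(a+b)"
    define u where "u = (b*(1-w) - x)/(a+b)"
    have "y/c \<le> 0" using False c divide_nonpos_pos[of y c] by simp
    hence w0: "w \<ge> 0" by (simp add: w_def)
    have "-x/a \<le> 1 - w" using i4 by (simp add: w_def)
    hence "-x \<le> a*(1-w)" using a by (simp add: field_simps)
    hence v0: "v \<ge> 0" using a b by (simp add: v_def)
    have "x/b \<le> 1 - w" using i3 by (simp add: w_def)
    hence "x \<le> b*(1-w)" using b by (simp add: field_simps)
    hence u0: "u \<ge> 0" using a b by (simp add: u_def)
    have "u + v = ((b*(1-w) - x) + (x + a*(1-w)))/(a+b)" unfolding u_def v_def by (rule add_divide_distrib[symmetric])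
    also have "\<dots> = (a+b)*(1-w)/(a+b)" by (simp add: algebra_simps)
    also have "\<dots> = 1 - w" using a b by simp
    finally have s: "u + v + w = 1" by simp
    have "p = u *\<^sub>R (-(a *\<^sub>R e1)) + v *\<^sub>R (b *\<^sub>R e1) + w *\<^sub>R (-(c *\<^sub>R e2))"
    proof -
      have ab: "a + b > 0" using a b by simp
      have "-(u * a) + v * b = (-((b*(1-w) - x) * a) + (x + a*(1-w)) * b)/(a+b)"
        unfolding u_def v_def by (simp add: divide_simps)
      also have "\<dots> = (x * (a+b))/(a+b)" by (simp add: algebra_simps)
      also have "\<dots> = x" using ab by simp
      finally have c1: "-(u * a) + v * b = x" .
      have c2: "-(w * c) = y" unfolding w_def using c by simp
      show ?thesis unfolding vec_eq_iff forall_2 using c1 c2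
        by (simp add: x_def y_def algebra_simps)
    qed
    hence "p \<in> convex hull {-(a *\<^sub>R e1), b *\<^sub>R e1, -(c *\<^sub>R e2)}"
      unfolding convex_hull_3 using u0 v0 w0 s by blast
    moreover have "convex hull {-(a *\<^sub>R e1), b *\<^sub>R e1, -(c *\<^sub>R e2)} \<subseteq> quad a b c d"
      unfolding quad_def by (rule hull_mono) auto
    ultimately show ?thesis by blast
  qed
qed

lemma quad_poly: "a>0 \<Longrightarrow> b>0 \<Longrightarrow> c>0 \<Longrightarrow> d>0 \<Longrightarrow> quad a b c d = qpoly a b c d"
  by (rule equalityI[OF quad_sub poly_sub])

lemma divmono1: "0 < d' \<Longrightarrow> d' \<le> d \<Longrightarrow> 0 \<le> (y::real) \<Longrightarrow> y/d \<le> y/d'"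
  by (simp add: divide_left_mono)
lemma divmono2: "0 < d' \<Longrightarrow> d' \<le> d \<Longrightarrow> (y::real) \<le> 0 \<Longrightarrow> y/d' \<le> y/d"
  by (smt (verit, best) divide_le_0_iff divide_left_mono_neg mult_pos_pos)

lemma arith_aux:
  fixes B A Yc Yc' Yd Yd' :: real
  assumes "(0\<le>Yc \<and> 0\<le>Yc' \<and> 0\<le>Yd \<and> 0\<le>Yd' \<and> Yd\<le>Yd' \<and> Yc'\<le>Yc) \<or> (Yc\<le>0 \<and> Yc'\<le>0 \<and> Yd\<le>0 \<and> Yd'\<le>0 \<and> Yd'\<le>Yd \<and> Yc\<le>Yc')"
  shows "((B+Yd\<le>1 \<and> -A+Yd\<le>1 \<and> B-Yc\<le>1 \<and> -A-Yc\<le>1) \<or> (B+Yd'\<le>1 \<and> -A+Yd'\<le>1 \<and> B-Yc'\<le>1 \<and> -A-Yc'\<le>1))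
      \<longleftrightarrow> (B+Yd\<le>1 \<and> -A+Yd\<le>1 \<and> B-Yc'\<le>1 \<and> -A-Yc'\<le>1)"
    and "((B+Yd\<le>1 \<and> -A+Yd\<le>1 \<and> B-Yc\<le>1 \<and> -A-Yc\<le>1) \<and> (B+Yd'\<le>1 \<and> -A+Yd'\<le>1 \<and> B-Yc'\<le>1 \<and> -A-Yc'\<le>1))
      \<longleftrightarrow> (B+Yd'\<le>1 \<and> -A+Yd'\<le>1 \<and> B-Yc\<le>1 \<and> -A-Yc\<le>1)"
  using assms by linarith+

lemma geo_pt:
  fixes x y :: real
  assumes a: "a>0" and b: "b>0" and c: "c>0" "c \<le> c'" and d: "d'>0" "d' \<le> d"
  shows "((x/b + y/d \<le> 1 \<and> -(x/a) + y/d \<le> 1 \<and> x/b - y/c \<le> 1 \<and> -(x/a) - y/c \<le> 1) \<or> (x/b + y/d' \<le> 1 \<and> -(x/a) + y/d' \<le> 1 \<and> x/b - y/c' \<le> 1 \<and> -(x/a) - y/c' \<le> 1)) \<longleftrightarrow> (x/b + y/d \<le> 1 \<and> -(x/a) + y/d \<le> 1 \<and> x/b - y/c' \<le> 1 \<and> -(x/a) - y/c' \<le> 1)" and "((x/b + y/d \<le> 1 \<and> -(x/a) + y/d \<le> 1 \<and> x/b - y/c \<le> 1 \<and> -(x/a) - y/c \<le> 1) \<and> (x/b + y/d' \<le> 1 \<and> -(x/a) + y/d' \<le> 1 \<and> x/b - y/c' \<le> 1 \<and> -(x/a) - y/c' \<le> 1)) \<longleftrightarrow> (x/b + y/d' \<le>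 1 \<and> -(x/a) + y/d' \<le> 1 \<and> x/b - y/c \<le> 1 \<and> -(x/a) - y/c \<le> 1)"
proof -
  have disj: "(0\<le>y/c \<and> 0\<le>y/c' \<and> 0\<le>y/d \<and> 0\<le>y/d' \<and> y/d\<le>y/d' \<and> y/c'\<le>y/c) \<or> (y/c\<le>0 \<and> y/c'\<le>0 \<and> y/d\<le>0 \<and> y/d'\<le>0 \<and> y/d'\<le>y/d \<and> y/c\<le>y/c')"
  proof (cases "y \<ge> 0")
    case True
    have "y/c \<ge> 0" "y/c' \<ge> 0" "y/d \<ge> 0" "y/d' \<ge> 0" using True a b c d by simp_all
    moreover have "y/d \<le> y/d'" "y/c' \<le> y/c" using divmono1 True c d by auto
    ultimately show ?thesis by blast
  next
    case False
    hence y0: "y \<le> 0" by simp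
    have "y/c \<le> 0" "y/c' \<le> 0" "y/d \<le> 0" "y/d' \<le> 0" using y0 a b c d
      by (simp_all add: divide_nonpos_pos)
    moreover have "y/d' \<le> y/d" "y/c \<le> y/c'" using divmono2 y0 c d by auto
    ultimately show ?thesis by blast
  qed
  show "((x/b + y/d \<le> 1 \<and> -(x/a) + y/d \<le> 1 \<and> x/b - y/c \<le> 1 \<and> -(x/a) - y/c \<le> 1) \<or> (x/b + y/d' \<le> 1 \<and> -(x/a) + y/d' \<le> 1 \<and> x/b - y/c' \<le> 1 \<and> -(x/a) - y/c' \<le> 1)) \<longleftrightarrow> (x/b + y/d \<le> 1 \<and> -(x/a) + y/d \<le> 1 \<and> x/b - y/c' \<le> 1 \<and> -(x/a) - y/c' \<le> 1)" by (rule arith_aux(1)[OF disj])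
  show "((x/b + y/d \<le> 1 \<and> -(x/a) + y/d \<le> 1 \<and> x/b - y/c \<le> 1 \<and> -(x/a) - y/c \<le> 1) \<and> (x/b + y/d' \<le> 1 \<and> -(x/a) + y/d' \<le> 1 \<and> x/b - y/c' \<le> 1 \<and> -(x/a) - y/c' \<le> 1)) \<longleftrightarrow> (x/b + y/d' \<le> 1 \<and> -(x/a) + y/d' \<le> 1 \<and> x/b - y/c \<le> 1 \<and> -(x/a) - y/c \<le> 1)" by (rule arith_aux(2)[OF disj])
qed

lemma geo:
  assumes a: "a>0" and b: "b>0" and c: "c>0" "c \<le> c'" and d: "d'>0" "d' \<le> d"
  shows "quad a b c d \<union> quad a b c' d' = quad a b c' d"
    and "quad a b c d \<inter> quad a b c' d' = quad a b c d'"
proof -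
  have pos: "c' > 0" "d > 0" using c d by auto
  show "quad a b c d \<union> quad a b c' d' = quad a b c' d"
    using a b c d pos geo_pt(1)[OF a b c d]
    by (auto simp: quad_poly qpoly_def)
  show "quad a b c d \<inter> quad a b c' d' = quad a b c d'"
    using a b c d pos geo_pt(2)[OF a b c d]
    by (auto simp: quad_poly qpoly_def)
qed

lemma inQ2: "a>0 \<Longrightarrow> b>0 \<Longrightarrow> c>0 \<Longrightarrow> d>0 \<Longrightarrow> quad a b c d \<in> Q2"
  unfolding Q2_def by blast

lemma val_rule:
  assumes val: "valuation_on Q2 \<mu>"
    and a: "a>0" and b: "b>0" and c: "c>0" "c \<le> c'" and d: "d'>0" "d' \<le> d"
  shows "\<mu> (quad a b c d) + \<mu> (quad a b c' d') = \<mu> (quad a b c' d) + \<mu> (quad a b c d')"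
proof -
  have pos: "c' > 0" "d > 0" using c d by auto
  have "\<mu> (quad a b c d \<union> quad a b c' d') + \<mu> (quad a b c d \<inter> quad a b c' d') = \<mu> (quad a b c d) + \<mu> (quad a b c' d')"
    using val unfolding valuation_on_def
    using inQ2[of a b c d] inQ2[of a b c' d'] inQ2[of a b c' d] inQ2[of a b c d'] a b c d pos geo[OF a b c d]
    by (metis (no_types, lifting))
  then show ?thesis using geo[OF a b c d] by simp
qed

lemma mv2: fixes A :: "real^2^2" and z :: "real^2" shows "(A *v z)$1 = A$1$1 * z$1 + A$1$2 * z$2" "(A *v z)$2 = A$2$1 * z$1 + A$2$2 * z$2"
  by (simp_all add: matrix_vector_mult_def sum_2)

definition Dg :: "real \<Rightarrow> real \<Rightarrow> real^2^2" where "Dg s t = vector [vector [s,0], vector [0,t]]"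
definition Sw :: "real^2^2" where "Sw = vector [vector [0,1], vector [1,0]]"

lemma Dg_e: "Dg s t *v (k *\<^sub>R e1) = (s*k) *\<^sub>R e1" "Dg s t *v (k *\<^sub>R e2) = (t*k) *\<^sub>R e2"
  "Dg s t *v (-(k *\<^sub>R e1)) = -((s*k) *\<^sub>R e1)" "Dg s t *v (-(k *\<^sub>R e2)) = -((t*k) *\<^sub>R e2)"
  by (simp_all add: vec_eq_iff forall_2 mv2 Dg_def)
lemma Sw_e: "Sw *v (k *\<^sub>R e1) = k *\<^sub>R e2" "Sw *v (k *\<^sub>R e2) = k *\<^sub>R e1"
  "Sw *v (-(k *\<^sub>R e1)) = -(k *\<^sub>R e2)" "Sw *v (-(k *\<^sub>R e2)) = -(k *\<^sub>R e1)"
  by (simp_all add: vec_eq_iff forall_2 mv2 Sw_def)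
lemma Dg_det: "det (Dg s t) = s * t" by (simp add: det_2 Dg_def)
lemma Sw_det: "det Sw = -1" by (simp add: det_2 Sw_def)
lemma Dg_comp: "(Dg s t *v v)$1 = s * v$1" "(Dg s t *v v)$2 = t * v$2"
  by (simp_all add: mv2 Dg_def)
lemma Sw_comp: "(Sw *v v)$1 = v$2" "(Sw *v v)$2 = v$1"
  by (simp_all add: mv2 Sw_def)

lemma quad_img: "(\<lambda>x. A *v x) ` quad a b c d = convex hull {A *v (-(a *\<^sub>R e1)), A *v (b *\<^sub>R e1), A *v (-(c *\<^sub>R e2)), A *v (d *\<^sub>R e2)}"
  unfolding quad_def by (simp add: convex_hull_linear_image[OF matrix_vector_mul_linear])

lemma cov_apply:
  assumes cov: "VL2_covariant \<mu>" and A: "det A = 1 \<or> det A = -1"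
    and p: "a>0" "b>0" "c>0" "d>0" and p': "a'>0" "b'>0" "c'>0" "d'>0"
    and img: "(\<lambda>x. A *v x) ` quad a b c d = quad a' b' c' d'"
  shows "\<mu> (quad a' b' c' d') = A *v \<mu> (quad a b c d)"
proof -
  have "A \<in> VL2" using A by (simp add: VL2_def)
  then have "\<mu> ((\<lambda>x. A *v x) ` quad a b c d) = A *v \<mu> (quad a b c d)"
    using cov inQ2[OF p] inQ2[OF p'] img unfolding VL2_covariant_def by (metis (no_types, lifting))
  then show ?thesis using img by simp
qed

lemma C_diag: assumes cov: "VL2_covariant \<mu>" and s: "s>0" and p: "a>0" "b>0" "c>0" "d>0"
  shows "\<mu> (quad (s*a) (s*b) (c/s) (d/s)) $1 = s * \<mu> (quad a b c d) $1"
proof -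
  have "\<mu> (quad (s*a) (s*b) (c/s) (d/s)) = Dg s (1/s) *v \<mu> (quad a b c d)"
  proof (rule cov_apply[OF cov])
    show "(\<lambda>x. Dg s (1/s) *v x) ` quad a b c d = quad (s*a) (s*b) (c/s) (d/s)"
      unfolding quad_img by (simp add: Dg_e quad_def)
  qed (use s p in \<open>simp_all add: Dg_det\<close>)
  then show ?thesis by (simp add: Dg_comp)
qed

lemma C_rx: assumes cov: "VL2_covariant \<mu>" and p: "a>0" "b>0" "c>0" "d>0"
  shows "\<mu> (quad b a c d) $1 = - (\<mu> (quad a b c d) $1)"
proof -
  have "\<mu> (quad b a c d) = Dg (-1) 1 *v \<mu> (quad a b c d)"
  proof (rule cov_apply[OF cov])
    show "(\<lambda>x. Dg (-1) 1 *v x) ` quad a b c d = quad b a c d"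
      unfolding quad_img by (simp add: Dg_e quad_def insert_commute)
  qed (use p in \<open>simp_all add: Dg_det\<close>)
  then show ?thesis by (simp add: Dg_comp)
qed

lemma C_ry: assumes cov: "VL2_covariant \<mu>" and p: "a>0" "b>0" "c>0" "d>0"
  shows "\<mu> (quad a b d c) $1 = \<mu> (quad a b c d) $1"
proof -
  have "\<mu> (quad a b d c) = Dg 1 (-1) *v \<mu> (quad a b c d)"
  proof (rule cov_apply[OF cov])
    show "(\<lambda>x. Dg 1 (-1) *v x) ` quad a b c d = quad a b d c"
      unfolding quad_img by (simp add: Dg_e quad_def insert_commute)
  qed (use p in \<open>simp_all add: Dg_det\<close>)
  then show ?thesis by (simp add: Dg_comp)
qed

lemma C_sw: assumes cov: "VL2_covariant \<mu>" and p: "a>0" "b>0" "c>0" "d>0"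
  shows "\<mu> (quad c d a b) $1 = \<mu> (quad a b c d) $2"
proof -
  have "\<mu> (quad c d a b) = Sw *v \<mu> (quad a b c d)"
  proof (rule cov_apply[OF cov])
    show "(\<lambda>x. Sw *v x) ` quad a b c d = quad c d a b"
      unfolding quad_img by (simp add: Sw_e quad_def insert_commute)
  qed (use p in \<open>simp_all add: Sw_det\<close>)
  then show ?thesis by (simp add: Sw_comp)
qed

lemma sym_cd: assumes val: "valuation_on Q2 \<mu>" and p: "a>0" "b>0" "c>0" "d>0"
  shows "\<mu> (quad a b c d) + \<mu> (quad a b d c) = \<mu> (quad a b c c) + \<mu> (quad a b d d)"
proof (cases "c \<le> d")
  case True
  show ?thesis using val_rule[OF val p(1,2,3) True p(3) True] by (simp add: add.commute)
next
  case False
  hence "d \<le> c" by simp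
  then show ?thesis using val_rule[OF val p(1,2,4) \<open>d \<le> c\<close> p(4) \<open>d \<le> c\<close>] by (simp add: add.commute)
qed

lemma sep: assumes val: "valuation_on Q2 \<mu>" and p: "x>0" "y>0"
  shows "\<mu> (quad 1 1 x y) + \<mu> (quad 1 1 1 1) = \<mu> (quad 1 1 x 1) + \<mu> (quad 1 1 1 y)"
proof -
  have o: "(0::real) < 1" by simp
  consider "x \<le> 1" "1 \<le> y" | "1 \<le> x" "y \<le> 1" | "x \<le> 1" "y \<le> 1" | "1 \<le> x" "1 \<le> y" by linarith
  then show ?thesis
  proof cases
    case 1
    show ?thesis using val_rule[OF val o o p(1) 1(1) o 1(2)] by simp
  next
    case 2
    show ?thesis using val_rule[OF val o o o 2(1) p(2) 2(2)] by (simp add: algebra_simps)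
  next
    case 3
    show ?thesis using val_rule[OF val o o p(1) 3(1) p(2) 3(2)] by (simp add: algebra_simps)
  next
    case 4
    show ?thesis using val_rule[OF val o o o 4(1) o 4(2)] by (simp add: algebra_simps)
  qed
qed

theorem lemma3p3:
  fixes \<mu> :: "(real^2) set \<Rightarrow> real^2" and F :: "real \<Rightarrow> real"
  assumes val: "valuation_on Q2 \<mu>"
    and cov: "VL2_covariant \<mu>"
    and F_def: "\<And>r. r > 0 \<Longrightarrow> F r = (1/2) * (\<mu> (quad 1 r 1 1)) $ 1"
    and pos: "a > 0" "b > 0" "c > 0" "d > 0"
  shows "\<mu> (quad a b c d) =
           vector [ -(1/c) * F (a*c) + (1/c) * F (b*c) - (1/d) * F (a*d) + (1/d) * F (b*d),
                    -(1/a) * F (a*c) - (1/b) * F (b*c) + (1/a) * F (a*d) + (1/b) * F (b*d) ]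
       \<and> \<mu> (quad a b c d) =
           vector [ (1/c) * (F (b*c) - F (a*c)), -(1/a) * F (a*c) - (1/b) * F (b*c) ]
         + vector [ (1/d) * (F (b*d) - F (a*d)), (1/a) * F (a*d) + (1/b) * F (b*d) ]"
proof -
  define h where "h x y = \<mu> (quad x y 1 1) $ 1" for x y
  have o: "(0::real) < 1" by simp
  have h_sw: "h x y = \<mu> (quad 1 1 x y) $ 2" if "x>0" "y>0" for x y
    unfolding h_def using C_sw[OF cov o o that] .
  have h_anti: "h y x = - h x y" if "x>0" "y>0" for x y
    unfolding h_def using C_rx[OF cov that o o] .
  have h11: "h 1 1 = 0" using h_anti[OF o o] by simp
  have hsep: "h x y + h 1 1 = h x 1 + h 1 y" if "x>0" "y>0" for x y
  proof -
    have "(\<mu> (quad 1 1 x y) + \<mu> (quad 1 1 1 1)) $ 2 = (\<mu> (quad 1 1 x 1) + \<mu> (quad 1 1 1 y)) $ 2"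
      using sep[OF val that] by simp
    then show ?thesis using h_sw that o by simp
  qed
  have hF: "h x y = 2 * F y - 2 * F x" if "x>0" "y>0" for x y
  proof -
    have "h x y = h x 1 + h 1 y" using hsep[OF that] h11 by simp
    also have "\<dots> = h 1 y - h 1 x" using h_anti[OF o that(1)] by simp
    finally show ?thesis using F_def[OF that(1)] F_def[OF that(2)] unfolding h_def by simp
  qed
  have diagc: "\<mu> (quad a b c c) $ 1 = (1/c) * h (a*c) (b*c)" if "a>0" "b>0" "c>0" for a b c
  proof -
    have "\<mu> (quad ((1/c)*(a*c)) ((1/c)*(b*c)) (1/(1/c)) (1/(1/c))) $ 1 = (1/c) * \<mu> (quad (a*c) (b*c) 1 1) $ 1"
      using C_diag[OF cov _ _ _ o o, of "1/c" "a*c" "b*c"] that by simp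
    then show ?thesis using that unfolding h_def by simp
  qed
  have G1: "\<mu> (quad a b c d) $ 1 = (1/c) * (F (b*c) - F (a*c)) + (1/d) * (F (b*d) - F (a*d))"
    if p: "a>0" "b>0" "c>0" "d>0" for a b c d
  proof -
    have "(\<mu> (quad a b c d) + \<mu> (quad a b d c)) $ 1 = (\<mu> (quad a b c c) + \<mu> (quad a b d d)) $ 1"
      using sym_cd[OF val p] by simp
    hence "2 * \<mu> (quad a b c d) $ 1 = \<mu> (quad a b c c) $ 1 + \<mu> (quad a b d d) $ 1"
      using C_ry[OF cov p] by simp
    also have "\<dots> = (1/c) * h (a*c) (b*c) + (1/d) * h (a*d) (b*d)"
      using diagc p by simp
    also have "\<dots> = (1/c) * (2 * F (b*c) - 2 * F (a*c)) + (1/d) * (2 * F (b*d) - 2 * F (a*d))"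
      using hF p by simp
    finally show ?thesis by (simp add: algebra_simps)
  qed
  have G2: "\<mu> (quad a b c d) $ 2 = (1/a) * (F (a*d) - F (a*c)) + (1/b) * (F (b*d) - F (b*c))"
  proof -
    have "\<mu> (quad a b c d) $ 2 = \<mu> (quad c d a b) $ 1" using C_sw[OF cov pos] by simp
    also have "\<dots> = (1/a) * (F (d*a) - F (c*a)) + (1/b) * (F (d*b) - F (c*b))"
      using G1 pos by simp
    finally show ?thesis by (simp add: mult.commute)
  qed
  show ?thesis
    unfolding vec_eq_iff forall_2 using G1[OF pos] G2
    by (simp add: algebra_simps)
qed

end
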